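(* Let $I$ be an open interval and $f\in C^\infty(I)$ real-valued. Define $$\alpha:=\sup_{t\in I}\limsup_{n\to\infty}\left(\frac{|f^{(n)}(t)|}{n!}\right)^{1/n},\qquad \beta:=\inf_{t\in I}\limsup_{n\to\infty}\left(\frac{|f^{(n)}(t)|}{n!}\right)^{1/n},$$ with values in $[0,\infty]$, and $R:=1/\alpha$, $S:=1/\beta$ (with $1/0=\infty$, $1/\infty=0$). Then for every $t\in I$ with $|t|<R$ the series $\hat f(t)$ converges absolutely, and for every $t\in I$ with $|t|>S$ the series $\hat f(t)$ diverges.
   Context: For a smooth function $f$ on an interval containing the point $t$, $\hat f(t)$ denotes the series $\hat f(t):=\sum_{n=0}^{\infty}\frac{(-1)^n}{n!}\,t^n f^{(n)}(t)$. *)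

theory Defs
  imports "HOL-Analysis.Analysis"
begin

definition smooth_on :: "real set \<Rightarrow> (real \<Rightarrow> real) \<Rightarrow> bool" where
  "smooth_on I f \<longleftrightarrow> (\<forall>n. \<forall>t\<in>I. ((deriv ^^ n) f) differentiable (at t))"

definition taylor_limsup :: "(real \<Rightarrow> real) \<Rightarrow> real \<Rightarrow> ereal" where
  "taylor_limsup f t = limsup (\<lambda>n. ereal ((\<bar>(deriv ^^ n) f t\<bar> / fact n) powr (1 / real n)))"

definition hat_term :: "(real \<Rightarrow> real) \<Rightarrow> real \<Rightarrow> nat \<Rightarrow> real" where
  "hat_term f t n = (-1) ^ n / fact n * t ^ n * (deriv ^^ n) f t"

end

theory Submission
  imports Defs
begin

lemma tl_nonneg: "0 \<le> taylor_limsup f t"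
proof -
  have "0 = limsup (\<lambda>n. 0::ereal)" by (simp add: Limsup_const)
  also have "\<dots> \<le> taylor_limsup f t" unfolding taylor_limsup_def
    by (intro Limsup_mono) auto
  finally show ?thesis .
qed

lemma conv_tl:
  "conv_radius (\<lambda>n. (-1) ^ n / fact n * (deriv ^^ n) f t) = inverse (taylor_limsup f t)"
proof -
  have "limsup (\<lambda>n. ereal (root n (norm ((-1) ^ n / fact n * (deriv ^^ n) f t :: real))))
      = taylor_limsup f t" unfolding taylor_limsup_def
  proof (rule Limsup_eq)
    show "\<forall>\<^sub>F n in sequentially. ereal (root n (norm ((-1) ^ n / fact n * (deriv ^^ n) f t :: real)))
       = ereal ((\<bar>(deriv ^^ n) f t\<bar> / fact n) powr (1 / real n))"
      using eventually_gt_at_top[of "0::nat"]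
    proof eventually_elim
      case (elim n)
      have "norm ((-1) ^ n / fact n * (deriv ^^ n) f t :: real) = \<bar>(deriv ^^ n) f t\<bar> / fact n"
        by (simp add: abs_mult)
      then show ?case using elim by (simp add: root_powr_inverse)
    qed
  qed
  then show ?thesis by (simp add: conv_radius_def)
qed

lemma hat_eq: "hat_term f t n = ((-1) ^ n / fact n * (deriv ^^ n) f t) * t ^ n"
  unfolding hat_term_def by simp

theorem theorem6:
  fixes I :: "real set" and f :: "real \<Rightarrow> real" and \<alpha> \<beta> R S :: ereal
  assumes "open I" and "is_interval I" and "I \<noteq> {}"
    and "smooth_on I f"
    and "\<alpha> = (SUP t\<in>I. taylor_limsup f t)"
    and "\<beta> = (INF t\<in>I. taylor_limsup f t)"
    and "R = inverse \<alpha>" and "S = inverse \<beta>"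
  shows "(\<forall>t\<in>I. ereal \<bar>t\<bar> < R \<longrightarrow> summable (\<lambda>n. \<bar>hat_term f t n\<bar>))
       \<and> (\<forall>t\<in>I. ereal \<bar>t\<bar> > S \<longrightarrow> \<not> summable (hat_term f t))"
proof safe
  fix t assume t: "t \<in> I" and lt: "ereal \<bar>t\<bar> < R"
  have "taylor_limsup f t \<le> \<alpha>" using assms(5) t by (auto intro: SUP_upper)
  then have "inverse \<alpha> \<le> inverse (taylor_limsup f t)"
    by (intro ereal_inverse_antimono tl_nonneg)
  moreover have "ereal (norm t) < inverse \<alpha>" using lt assms(7) by simp
  ultimately have "ereal (norm t) < conv_radius (\<lambda>n. (-1) ^ n / fact n * (deriv ^^ n) f t)"
    unfolding conv_tl by (rule_tac order_less_le_trans) auto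
  from abs_summable_in_conv_radius[OF this] show "summable (\<lambda>n. \<bar>hat_term f t n\<bar>)"
    by (simp add: hat_eq)
next
  fix t assume t: "t \<in> I" and gt: "ereal \<bar>t\<bar> > S" and s: "summable (hat_term f t)"
  have "\<beta> \<le> taylor_limsup f t" using assms(6) t by (auto intro: INF_lower)
  moreover have "0 \<le> \<beta>" using assms(6) by (auto intro: INF_greatest tl_nonneg)
  ultimately have "inverse (taylor_limsup f t) \<le> inverse \<beta>"
    by (intro ereal_inverse_antimono)
  moreover have "ereal (norm t) > inverse \<beta>" using gt assms(8) by simp
  ultimately have "ereal (norm t) > conv_radius (\<lambda>n. (-1) ^ n / fact n * (deriv ^^ n) f t)"
    unfolding conv_tl by (rule_tac order_le_less_trans) auto
  from not_summable_outside_conv_radius[OF this] s show False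
    unfolding hat_eq[symmetric] by blast
qed

end
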